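(* Let $G$ be a group and $L,R$ nonempty subsets of $G$ such that $\mathcal{W}(L)$ and $\mathcal{W}(R)$ are subgroups of $G$. In $2\mathrm{S}(G;L,R)$, if $g=w_{L^{-1},a}\,w_{R,n}$ for integers $a,n\ge 0$, then for every $l\in L$ and every $r\in R$, $g$ is strongly connected to $l^d$ and to $r^d$, where $d=n-a$.
   Context: For nonempty subsets $L,R$ of a group $G$, the two-sided group digraph $2\mathrm{S}(G;L,R)$ has vertex set $G$ and a directed arc $(g,h)$ if and only if $h=l^{-1}gr$ for some $l\in L$, $r\in R$. For a nonempty subset $S$, $w_{S,n}$ denotes the element given by some word $s_1\cdots s_n$ with $s_i\in S$ (length $0$ giving $e$), and $\mathcal{W}(S)$ is the set of elements given by words in $S$ of positive length. Vertex $g$ is strongly connected to $h$ if there are directed paths from $g$ to $h$ and from $h$ to $g$. *)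

theory Defs
  imports "HOL-Algebra.Group"
begin

definition word_prod :: "('a, 'b) monoid_scheme \<Rightarrow> 'a list \<Rightarrow> 'a" where
  "word_prod G xs = foldr (\<lambda>x y. x \<otimes>\<^bsub>G\<^esub> y) xs \<one>\<^bsub>G\<^esub>"

(* set of all possible values of w_{S,n}: elements given by words of length n in S *)
definition words_len :: "('a, 'b) monoid_scheme \<Rightarrow> 'a set \<Rightarrow> nat \<Rightarrow> 'a set" where
  "words_len G S n = {word_prod G xs | xs. length xs = n \<and> set xs \<subseteq> S}"

definition W :: "('a, 'b) monoid_scheme \<Rightarrow> 'a set \<Rightarrow> 'a set" where
  "W G S = (\<Union>n\<in>{1..}. words_len G S n)"

definition inv_set :: "('a, 'b) monoid_scheme \<Rightarrow> 'a set \<Rightarrow> 'a set" where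
  "inv_set G S = (\<lambda>s. inv\<^bsub>G\<^esub> s) ` S"

definition two_sided_arcs :: "('a, 'b) monoid_scheme \<Rightarrow> 'a set \<Rightarrow> 'a set \<Rightarrow> ('a \<times> 'a) set" where
  "two_sided_arcs G L R = {(g, h). g \<in> carrier G \<and> h \<in> carrier G \<and>
      (\<exists>l\<in>L. \<exists>r\<in>R. h = inv\<^bsub>G\<^esub> l \<otimes>\<^bsub>G\<^esub> g \<otimes>\<^bsub>G\<^esub> r)}"

definition strongly_connected ::
  "('a, 'b) monoid_scheme \<Rightarrow> 'a set \<Rightarrow> 'a set \<Rightarrow> 'a \<Rightarrow> 'a \<Rightarrow> bool" where
  "strongly_connected G L R g h \<longleftrightarrow>
     (g, h) \<in> (two_sided_arcs G L R)\<^sup>* \<and> (h, g) \<in> (two_sided_arcs G L R)\<^sup>*"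

end

theory Submission
  imports Defs
begin

context group
begin

lemma wp_closed: "set xs \<subseteq> carrier G \<Longrightarrow> word_prod G xs \<in> carrier G"
  by (induction xs) (auto simp: word_prod_def)

lemma wp_append: "set xs \<subseteq> carrier G \<Longrightarrow> set ys \<subseteq> carrier G \<Longrightarrow>
   word_prod G (xs @ ys) = word_prod G xs \<otimes> word_prod G ys"
proof (induction xs)
  case Nil then show ?case using wp_closed[of ys] by (simp add: word_prod_def)
next
  case (Cons x xs)
  then show ?case using wp_closed[of xs] wp_closed[of ys]
    by (simp add: word_prod_def m_assoc)
qed

lemma wl_mult: "S \<subseteq> carrier G \<Longrightarrow> x \<in> words_len G S i \<Longrightarrow> y \<in> words_len G S j \<Longrightarrow>
   x \<otimes> y \<in> words_len G S (i + j)"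
  unfolding words_len_def
proof clarify
  fix xs ys assume "S \<subseteq> carrier G" "set xs \<subseteq> S" "set ys \<subseteq> S" "i = length xs" "j = length ys"
  then show "\<exists>zs. word_prod G xs \<otimes> word_prod G ys = word_prod G zs \<and>
          length zs = length xs + length ys \<and> set zs \<subseteq> S"
    by (intro exI[of _ "xs @ ys"]) (auto simp: wp_append)
qed

lemma wl_one: "\<one> \<in> words_len G S 0"
  unfolding words_len_def word_prod_def by auto

lemma wl_closed: "S \<subseteq> carrier G \<Longrightarrow> x \<in> words_len G S i \<Longrightarrow> x \<in> carrier G"
  unfolding words_len_def using wp_closed by blast

lemma wl_one_mult: assumes "S \<subseteq> carrier G" "\<one> \<in> words_len G S m"
  shows "\<one> \<in> words_len G S (c * m)"
proof (induction c)
  case 0 then show ?case using wl_one by simp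
next
  case (Suc c)
  then show ?case using wl_mult[OF assms(1) assms(2) Suc] by (simp add: add.commute)
qed

lemma wl_pow: "l \<in> S \<Longrightarrow> S \<subseteq> carrier G \<Longrightarrow> l [^] (k::nat) \<in> words_len G S k"
proof (induction k)
  case 0 then show ?case using wl_one by simp
next
  case (Suc k)
  have "l \<in> words_len G S 1" unfolding words_len_def word_prod_def
    using Suc.prems by (intro CollectI exI[of _ "[l]"]) auto
  from wl_mult[OF Suc.prems(2) Suc.IH[OF Suc.prems] this] show ?case by simp
qed

lemma steps:
  assumes "L \<subseteq> carrier G" "R \<subseteq> carrier G"
  shows "x \<in> carrier G \<Longrightarrow> set ls \<subseteq> L \<Longrightarrow> set rs \<subseteq> R \<Longrightarrow> length ls = length rs \<Longrightarrow>
    (x, inv (word_prod G ls) \<otimes> x \<otimes> word_prod G rs) \<in> (two_sided_arcs G L R)\<^sup>*"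
proof (induction ls arbitrary: rs x)
  case Nil then show ?case by (simp add: word_prod_def)
next
  case (Cons l ls)
  then obtain r rs' where rs: "rs = r # rs'" by (cases rs) auto
  have l: "l \<in> carrier G" and r: "r \<in> carrier G" using Cons.prems rs assms by auto
  have cl: "word_prod G ls \<in> carrier G" using Cons.prems assms wp_closed by auto
  have cr: "word_prod G rs' \<in> carrier G" using Cons.prems assms wp_closed rs by auto
  define y where "y = inv l \<otimes> x \<otimes> r"
  have y: "y \<in> carrier G" using l r Cons.prems by (simp add: y_def)
  have arc: "(x, y) \<in> two_sided_arcs G L R" unfolding two_sided_arcs_def y_def
    using Cons.prems l r y rs y_def by auto
  have "(y, inv (word_prod G ls) \<otimes> y \<otimes> word_prod G rs') \<in> (two_sided_arcs G L R)\<^sup>*"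
    using Cons.IH[OF y, of rs'] Cons.prems rs by auto
  moreover have "inv (word_prod G ls) \<otimes> y \<otimes> word_prod G rs' =
      inv (word_prod G (l # ls)) \<otimes> x \<otimes> word_prod G rs"
    using l r cl cr Cons.prems rs by (simp add: y_def word_prod_def inv_mult_group m_assoc)
  ultimately show ?case using arc by (metis converse_rtrancl_into_rtrancl)
qed

lemma steps_wl:
  assumes "L \<subseteq> carrier G" "R \<subseteq> carrier G" "x \<in> carrier G"
    "lam \<in> words_len G L k" "rho \<in> words_len G R k"
  shows "(x, inv lam \<otimes> x \<otimes> rho) \<in> (two_sided_arcs G L R)\<^sup>*"
  using assms steps[OF assms(1,2) assms(3)] unfolding words_len_def by auto

lemma inv_word:
  assumes "S \<subseteq> carrier G" "subgroup (W G S) G" "l \<in> S"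
  shows "\<exists>p. inv l \<in> words_len G S p \<and> \<one> \<in> words_len G S (Suc p)"
proof -
  have "l \<in> words_len G S 1" unfolding words_len_def word_prod_def
    using assms by (intro CollectI exI[of _ "[l]"]) auto
  then have lW: "l \<in> W G S" unfolding W_def by auto
  have "inv l \<in> W G S" by (rule subgroup.m_inv_closed[OF assms(2) lW])
  then obtain p where p: "inv l \<in> words_len G S p" unfolding W_def by auto
  have "l \<otimes> inv l \<in> words_len G S (1 + p)" by (rule wl_mult[OF assms(1) \<open>l \<in> words_len G S 1\<close> p])
  moreover have "l \<otimes> inv l = \<one>" using assms by auto
  ultimately show ?thesis using p by auto
qed

lemma sym_arc:
  assumes "L \<subseteq> carrier G" "R \<subseteq> carrier G" "subgroup (W G L) G" "subgroup (W G R) G"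
    "(x, y) \<in> two_sided_arcs G L R"
  shows "(y, x) \<in> (two_sided_arcs G L R)\<^sup>*"
proof -
  from assms(5) obtain l r where x: "x \<in> carrier G" and lr: "l \<in> L" "r \<in> R"
    and y: "y = inv l \<otimes> x \<otimes> r" unfolding two_sided_arcs_def by auto
  have l: "l \<in> carrier G" and r: "r \<in> carrier G" using lr assms by auto
  obtain p where p: "inv l \<in> words_len G L p" "\<one> \<in> words_len G L (Suc p)"
    using inv_word[OF assms(1,3) lr(1)] by auto
  obtain q where q: "inv r \<in> words_len G R q" "\<one> \<in> words_len G R (Suc q)"
    using inv_word[OF assms(2,4) lr(2)] by auto
  have a: "inv l \<otimes> \<one> \<in> words_len G L (p + q * Suc p)"
    by (rule wl_mult[OF assms(1) p(1) wl_one_mult[OF assms(1) p(2)]])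
  have b: "inv r \<otimes> \<one> \<in> words_len G R (q + p * Suc q)"
    by (rule wl_mult[OF assms(2) q(1) wl_one_mult[OF assms(2) q(2)]])
  have eq: "q + p * Suc q = p + q * Suc p" by (simp add: algebra_simps)
  have a': "inv l \<in> words_len G L (p + q * Suc p)" using a l by simp
  have b0: "inv r \<in> words_len G R (q + p * Suc q)" using b r by (simp only: r_one inv_closed)
  have b': "inv r \<in> words_len G R (p + q * Suc p)" using b0 by (simp only: eq)
  have yc: "y \<in> carrier G" using y x l r by simp
  have "(y, inv (inv l) \<otimes> y \<otimes> inv r) \<in> (two_sided_arcs G L R)\<^sup>*"
    by (rule steps_wl[OF assms(1,2) yc a' b'])
  moreover have "inv (inv l) \<otimes> y \<otimes> inv r = x" using x l r y by (simp add: m_assoc flip: m_assoc[of l "inv l"])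
  ultimately show ?thesis by simp
qed

lemma sym_rt:
  assumes "L \<subseteq> carrier G" "R \<subseteq> carrier G" "subgroup (W G L) G" "subgroup (W G R) G"
    "(x, y) \<in> (two_sided_arcs G L R)\<^sup>*"
  shows "(y, x) \<in> (two_sided_arcs G L R)\<^sup>*"
  using assms(5)
proof induction
  case base then show ?case by simp
next
  case (step y z)
  then show ?case using sym_arc[OF assms(1-4) step(2)] by (meson rtrancl_trans)
qed

end

theorem mainTheorem7:
  fixes G (structure)
    and L R :: "'a set" and g :: 'a and a n :: nat and u v :: 'a
  assumes "group G"
    and "L \<subseteq> carrier G" and "L \<noteq> {}"
    and "R \<subseteq> carrier G" and "R \<noteq> {}"
    and "subgroup (W G L) G" and "subgroup (W G R) G"
    and "u \<in> words_len G (inv_set G L) a"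
    and "v \<in> words_len G R n"
    and "g = u \<otimes> v"
  shows "\<forall>l\<in>L. \<forall>r\<in>R.
           strongly_connected G L R g (l [^] (int n - int a)) \<and>
           strongly_connected G L R g (r [^] (int n - int a))"
proof (intro ballI)
  fix l r assume lL: "l \<in> L" and rR: "r \<in> R"
  interpret group G by (rule assms(1))
  let ?A = "two_sided_arcs G L R"
  have symm: "\<And>x y. (x, y) \<in> ?A\<^sup>* \<Longrightarrow> (y, x) \<in> ?A\<^sup>*"
    using sym_rt[OF assms(2,4,6,7)] by blast
  have l: "l \<in> carrier G" and r: "r \<in> carrier G" using lL rR assms by auto
  obtain xs where xs: "u = word_prod G xs" "length xs = a" "set xs \<subseteq> inv_set G L"
    using assms(8) unfolding words_len_def by auto
  define lam where "lam = word_prod G (rev (map (\<lambda>x. inv x) xs))"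
  have mi: "set (map (\<lambda>x. inv x) xs) \<subseteq> L" using xs(3) assms(2) unfolding inv_set_def by (auto simp: subset_iff)
  have invs: "set xs \<subseteq> carrier G" using xs(3) assms(2) unfolding inv_set_def by auto
  have lamw: "lam \<in> words_len G L a" unfolding lam_def words_len_def using mi xs
    by (intro CollectI exI[of _ "rev (map (\<lambda>x. inv x) xs)"]) auto
  have "\<And>ys. set ys \<subseteq> carrier G \<Longrightarrow> inv (word_prod G (rev (map (\<lambda>x. inv x) ys))) = word_prod G ys"
  proof -
    fix ys show "set ys \<subseteq> carrier G \<Longrightarrow> inv (word_prod G (rev (map (\<lambda>x. inv x) ys))) = word_prod G ys"
    proof (induction ys)
      case Nil then show ?case by (simp add: word_prod_def)
    next
      case (Cons y ys)
      have c1: "word_prod G (rev (map (\<lambda>x. inv x) ys)) \<in> carrier G" using Cons.prems by (intro wp_closed) auto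
      have "word_prod G (rev (map (\<lambda>x. inv x) (y # ys))) = word_prod G (rev (map (\<lambda>x. inv x) ys)) \<otimes> word_prod G [inv y]"
        using Cons.prems by (simp, intro wp_append) auto
      also have "\<dots> = word_prod G (rev (map (\<lambda>x. inv x) ys)) \<otimes> inv y" using Cons.prems by (simp add: word_prod_def)
      finally show ?case using Cons c1 by (simp add: inv_mult_group word_prod_def)
    qed
  qed
  then have u: "u = inv lam" using invs xs(1) lam_def by auto
  have lc: "lam \<in> carrier G" using wl_closed[OF assms(2) lamw] .
  have vc: "v \<in> carrier G" using wl_closed[OF assms(4) assms(9)] .
  have g: "g = inv lam \<otimes> v" using assms(10) u by simp
  have lr: "(l [^] (int n - int a), r [^] (int n - int a)) \<in> ?A\<^sup>*"
  proof (cases "a \<le> n")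
    case True
    define k where "k = n - a"
    have e: "int n - int a = int k" using True k_def by simp
    have "(l [^] k, inv (l [^] k) \<otimes> l [^] k \<otimes> r [^] k) \<in> ?A\<^sup>*"
      by (rule steps_wl[OF assms(2,4) _ wl_pow[OF lL assms(2)] wl_pow[OF rR assms(4)]]) (use l in simp)
    then show ?thesis using e l r by (simp add: int_pow_int)
  next
    case False
    define k where "k = a - n"
    have e: "int n - int a = - int k" using False k_def by simp
    have "(inv (r [^] k), inv (l [^] k) \<otimes> inv (r [^] k) \<otimes> r [^] k) \<in> ?A\<^sup>*"
      by (rule steps_wl[OF assms(2,4) _ wl_pow[OF lL assms(2)] wl_pow[OF rR assms(4)]]) (use r in simp)
    then have "(inv (r [^] k), inv (l [^] k)) \<in> ?A\<^sup>*" using l r by (simp add: m_assoc)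
    then show ?thesis using e l r symm by (simp add: int_pow_neg_int)
  qed
  have gl: "(l [^] (int n - int a), g) \<in> ?A\<^sup>* \<or> (r [^] (int n - int a), g) \<in> ?A\<^sup>*"
  proof (cases "a \<le> n")
    case True
    define k where "k = n - a"
    have e: "int n - int a = int k" using True k_def by simp
    have w: "l [^] k \<otimes> lam \<in> words_len G L n"
    proof -
      have "l [^] k \<otimes> lam \<in> words_len G L (k + a)" by (rule wl_mult[OF assms(2) wl_pow[OF lL assms(2)] lamw])
      moreover have "k + a = n" using True k_def by simp
      ultimately show ?thesis by simp
    qed
    have "(l [^] k, inv (l [^] k \<otimes> lam) \<otimes> l [^] k \<otimes> v) \<in> ?A\<^sup>*"
      by (rule steps_wl[OF assms(2,4) _ w assms(9)]) (use l in simp)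
    moreover have "inv (l [^] k \<otimes> lam) \<otimes> l [^] k \<otimes> v = g"
      using l lc vc g by (simp add: inv_mult_group m_assoc)
    ultimately show ?thesis using e by (simp add: int_pow_int)
  next
    case False
    define k where "k = a - n"
    have e: "int n - int a = - int k" using False k_def by simp
    have w: "r [^] k \<otimes> v \<in> words_len G R a"
    proof -
      have "r [^] k \<otimes> v \<in> words_len G R (k + n)" by (rule wl_mult[OF assms(4) wl_pow[OF rR assms(4)] assms(9)])
      moreover have "k + n = a" using False k_def by simp
      ultimately show ?thesis by simp
    qed
    have "(inv (r [^] k), inv lam \<otimes> inv (r [^] k) \<otimes> (r [^] k \<otimes> v)) \<in> ?A\<^sup>*"
      by (rule steps_wl[OF assms(2,4) _ lamw w]) (use r in simp)
    moreover have "inv lam \<otimes> inv (r [^] k) \<otimes> (r [^] k \<otimes> v) = g"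
      using r lc vc g by (simp add: m_assoc flip: m_assoc[of "inv (r [^] k)" "r [^] k"])
    ultimately show ?thesis using e r by (simp add: int_pow_neg_int)
  qed
  have A: "(g, l [^] (int n - int a)) \<in> ?A\<^sup>*" and B: "(g, r [^] (int n - int a)) \<in> ?A\<^sup>*"
    using gl lr symm by (meson rtrancl_trans)+
  show "strongly_connected G L R g (l [^] (int n - int a)) \<and>
           strongly_connected G L R g (r [^] (int n - int a))"
    unfolding strongly_connected_def using A B symm by blast
qed

end
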